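(* Let $\mathcal{S}$ be a relational structure admitting an injective unary FA-presentation $(a^*,\phi)$, and let $R$ be a binary relation in the signature of $\mathcal{S}$. Let $R^*$ denote the reflexive and transitive closure of $R$. Then $\Lambda(R^*,\phi)=\{(u,v)\in a^*\times a^* : (u\phi,v\phi)\in R^*\}$ is regular. Hence $\mathcal{S}$ augmented by the relation $R^*$ is also unary FA-presentable.
   Context: For words $w_1,\dots,w_r$ over a finite alphabet $A$, $\mathrm{conv}(w_1,\dots,w_r)$ is the word over $(A\cup\{\$\})^r$ (with $\$\notin A$) whose $j$-th letter is the tuple of $j$-th letters of the $w_i$, shorter words being padded at the end with $\$$ up to the maximal length. A relation $X\subseteq (A^* )^r$ is regular if $\{\mathrm{conv}(w_1,\dots,w_r):(w_1,\dots,w_r)\in X\}$ is a regular language. An FA-presentation of a relational structure $\mathcal{S}=(S,R_1,\dots,R_n)$ is a pair $(L,\phi)$ with $L$ a regular language over a finite alphabet and $\phi:L\to S$ surjective such that for every relation $R\in\{=,R_1,\dots,R_n\}$ of arity $r$ the relation $\Lambda(R,\phi)=\{(w_1,\dots,w_r)\in L^r : R(w_1\phi,\dots,w_r\phi)\}$ is regular. It is unary if $L$ is over a one-letter alphabet $\{a\}$, and a structure is unary FA-presentable if it admits a unary FA-presentation. An injective unary FA-presentation $(a^*,\phi)$ is one with $L=a^*$ and $\phi$ injective (hence bijective). *)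

theory Defs
  imports Main
begin

text \<open>Convolution of finitely many words: the j-th letter is the list (tuple) of the
j-th letters of the words, None playing the role of the padding symbol.\<close>
definition maxlen :: "'a list list \<Rightarrow> nat" where
  "maxlen ws = foldr max (map length ws) 0"

definition conv :: "'a list list \<Rightarrow> 'a option list list" where
  "conv ws = map (\<lambda>j. map (\<lambda>w. if j < length w then Some (w ! j) else None) ws) [0..<maxlen ws]"

definition regular_lang :: "'a set \<Rightarrow> 'a list set \<Rightarrow> bool" where
  "regular_lang Alph L \<longleftrightarrow> finite Alph \<and> L \<subseteq> lists Alph \<and>
     (\<exists>(Q::nat set) (delta::nat \<Rightarrow> 'a \<Rightarrow> nat) q0 F.
        finite Q \<and> q0 \<in> Q \<and> (\<forall>q\<in>Q. \<forall>x\<in>Alph. delta q x \<in> Q) \<and>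
        L = {w \<in> lists Alph. foldl delta q0 w \<in> F})"

definition conv_alphabet :: "'a set \<Rightarrow> nat \<Rightarrow> 'a option list set" where
  "conv_alphabet A r = {xs. length xs = r \<and> set xs \<subseteq> Some ` A \<union> {None}}"

definition regular_rel :: "'a set \<Rightarrow> nat \<Rightarrow> 'a list list set \<Rightarrow> bool" where
  "regular_rel A r X \<longleftrightarrow> X \<subseteq> {ws. length ws = r \<and> set ws \<subseteq> lists A} \<and>
     regular_lang (conv_alphabet A r) (conv ` X)"

definition Lambda :: "'a list set \<Rightarrow> ('a list \<Rightarrow> 's) \<Rightarrow> nat \<Rightarrow> ('s list \<Rightarrow> bool) \<Rightarrow> 'a list list set" where
  "Lambda L phi r P = {ws. length ws = r \<and> set ws \<subseteq> L \<and> P (map phi ws)}"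

text \<open>A relational structure is a carrier S with a list of relations (arity, predicate).
An FA-presentation (L, phi) over the finite alphabet A.\<close>
definition FA_presentation ::
  "'a set \<Rightarrow> 'a list set \<Rightarrow> ('a list \<Rightarrow> 's) \<Rightarrow> 's set \<Rightarrow> (nat \<times> ('s list \<Rightarrow> bool)) list \<Rightarrow> bool" where
  "FA_presentation A L phi S rels \<longleftrightarrow> finite A \<and> regular_lang A L \<and> phi ` L = S \<and>
     regular_rel A 2 (Lambda L phi 2 (\<lambda>xs. xs ! 0 = xs ! 1)) \<and>
     (\<forall>(r, P) \<in> set rels. regular_rel A r (Lambda L phi r P))"

text \<open>Unary: the alphabet is the one-letter alphabet {()}.\<close>
definition unary_FA_presentable :: "'s set \<Rightarrow> (nat \<times> ('s list \<Rightarrow> bool)) list \<Rightarrow> bool" where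
  "unary_FA_presentable S rels \<longleftrightarrow> (\<exists>L (phi :: unit list \<Rightarrow> 's). FA_presentation {()} L phi S rels)"

definition injective_unary_FA_presentation ::
  "'s set \<Rightarrow> (nat \<times> ('s list \<Rightarrow> bool)) list \<Rightarrow> (unit list \<Rightarrow> 's) \<Rightarrow> bool" where
  "injective_unary_FA_presentation S rels phi \<longleftrightarrow>
     FA_presentation {()} (lists {()}) phi S rels \<and> inj_on phi (lists {()})"

definition rtc_on :: "'s set \<Rightarrow> ('s list \<Rightarrow> bool) \<Rightarrow> 's \<Rightarrow> 's \<Rightarrow> bool" where
  "rtc_on S P = (\<lambda>x y. x \<in> S \<and> y \<in> S \<and> P [x, y])\<^sup>*\<^sup>*"

end

theory Submission
  imports Defs "HOL-Library.Countable"
begin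

locale per =
  fixes E :: "nat \<Rightarrow> nat \<Rightarrow> bool" and N p :: nat
  assumes p_pos: "p > 0"
    and H1: "\<And>x y. N \<le> x \<Longrightarrow> N \<le> y \<Longrightarrow> E (x+p) (y+p) = E x y"
    and H2: "\<And>x y. x + N \<le> y \<Longrightarrow> E x (y+p) = E x y"
    and H3: "\<And>x y. y + N \<le> x \<Longrightarrow> E (x+p) y = E x y"
begin

definition cls :: "nat \<Rightarrow> nat" where
  "cls t = (if t < N then t else N + (t - N) mod p)"

lemma cls_lt: "cls t < N + p"
  using p_pos by (auto simp: cls_def)

lemma cls_cls: "cls (cls t) = cls t"
  by (auto simp: cls_def)

lemma cls_0: "cls 0 = 0"
  by (auto simp: cls_def)

lemma cls_Suc: "cls a = cls b \<Longrightarrow> cls (Suc a) = cls (Suc b)"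
  unfolding cls_def
  by (auto split: if_splits simp: Suc_diff_le mod_Suc)

lemma cls_add: "cls a = cls b \<Longrightarrow> cls (a + k) = cls (b + k)"
  by (induction k) (auto intro: cls_Suc)

lemma cls_shift: "N \<le> t \<Longrightarrow> p dvd d \<Longrightarrow> cls (t + d) = cls t"
proof -
  assume a: "N \<le> t" "p dvd d"
  then obtain k where "d = p * k" by (auto elim: dvdE)
  then have "t + d - N = (t - N) + k * p" using a by (simp add: algebra_simps)
  then have "(t + d - N) mod p = (t - N) mod p" by simp
  then show ?thesis using a by (simp add: cls_def)
qed

lemma cls_decomp: "N \<le> t \<Longrightarrow> t = cls t + ((t - N) div p) * p \<and> N \<le> cls t"
  unfolding cls_def by (auto simp: div_mult_mod_eq)

lemma E_shift: "N \<le> x \<Longrightarrow> N \<le> y \<Longrightarrow> E (x + j*p) (y + j*p) = E x y"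
proof (induction j)
  case (Suc j)
  have "E (x + Suc j*p) (y + Suc j*p) = E ((x + j*p) + p) ((y + j*p) + p)"
    by (simp add: algebra_simps)
  also have "\<dots> = E (x + j*p) (y + j*p)" using Suc.prems by (intro H1) auto
  finally show ?case using Suc by simp
qed simp

lemma E_ext: "N \<le> k \<Longrightarrow> E a (a + k + j*p) = E a (a + k)"
proof (induction j)
  case (Suc j)
  have "E a (a + k + Suc j*p) = E a ((a + k + j*p) + p)" by (simp add: algebra_simps)
  also have "\<dots> = E a (a + k + j*p)" using Suc.prems by (intro H2) auto
  finally show ?case using Suc by simp
qed simp

lemma E_ext': "N \<le> k \<Longrightarrow> E (a + k + j*p) a = E (a + k) a"
proof (induction j)
  case (Suc j)
  have "E (a + k + Suc j*p) a = E ((a + k + j*p) + p) a" by (simp add: algebra_simps)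
  also have "\<dots> = E (a + k + j*p) a" using Suc.prems by (intro H3) auto
  finally show ?case using Suc by simp
qed simp

lemma E_norm1: "E a (a+k) = E (cls a) (cls a + k) \<and> E (a+k) a = E (cls a + k) (cls a)"
proof (cases "a < N")
  case True then show ?thesis by (simp add: cls_def)
next
  case False
  define j where "j = (a - N) div p"
  have a: "a = cls a + j*p" "N \<le> cls a" using cls_decomp[of a] False by (auto simp: j_def)
  have "E a (a+k) = E (cls a + j*p) ((cls a + k) + j*p)" using a by (metis add.commute add.left_commute)
  also have "\<dots> = E (cls a) (cls a + k)" using a by (intro E_shift) auto
  moreover have "E (a+k) a = E ((cls a + k) + j*p) (cls a + j*p)" using a by (metis add.commute add.left_commute)
  moreover have "\<dots> = E (cls a + k) (cls a)" using a by (intro E_shift) auto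
  ultimately show ?thesis by simp
qed

lemma E_norm2: "E c (c+k) = E c (c + cls k) \<and> E (c+k) c = E (c + cls k) c"
proof (cases "k < N")
  case True then show ?thesis by (simp add: cls_def)
next
  case False
  define j where "j = (k - N) div p"
  have k: "k = cls k + j*p" "N \<le> cls k" using cls_decomp[of k] False by (auto simp: j_def)
  have "E c (c+k) = E c (c + cls k + j*p)" using k by (metis add.assoc)
  also have "\<dots> = E c (c + cls k)" using k by (intro E_ext) auto
  moreover have "E (c+k) c = E (c + cls k + j*p) c" using k by (metis add.assoc)
  moreover have "\<dots> = E (c + cls k) c" using k by (intro E_ext') auto
  ultimately show ?thesis by simp
qed

lemma E_norm: "E a (a+k) = E (cls a) (cls a + cls k) \<and> E (a+k) a = E (cls a + cls k) (cls a)"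
  using E_norm1[of a k] E_norm2[of "cls a" k] by simp

lemma E_cls:
  assumes "u \<le> b" "u' \<le> b'" "cls u = cls u'" "cls (b - u) = cls (b' - u')"
  shows "E u b = E u' b' \<and> E b u = E b' u'"
proof -
  have b: "b = u + (b - u)" "b' = u' + (b' - u')" using assms by auto
  show ?thesis using E_norm[of u "b - u"] E_norm[of u' "b' - u'"] assms b by metis
qed

end

context per begin

definition EL :: "nat \<Rightarrow> nat \<Rightarrow> nat \<Rightarrow> bool" where
  "EL z a b \<longleftrightarrow> a < z \<and> b < z \<and> E a b"
definition ER :: "nat \<Rightarrow> nat \<Rightarrow> nat \<Rightarrow> bool" where
  "ER z a b \<longleftrightarrow> z \<le> a \<and> z \<le> b \<and> E a b"
definition key :: "(nat \<Rightarrow> bool \<times> bool) \<Rightarrow> nat \<Rightarrow> nat \<Rightarrow> nat \<times> nat \<times> bool \<times> bool" where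
  "key mk z u = (cls u, cls (z - u), mk u)"
definition Sig :: "(nat \<Rightarrow> bool \<times> bool) \<Rightarrow> nat \<Rightarrow> ((nat \<times> nat \<times> bool \<times> bool) \<times> (nat \<times> nat \<times> bool \<times> bool)) set" where
  "Sig mk z = {(key mk z u, key mk z u') | u u'. u < z \<and> u' < z \<and> (EL z)\<^sup>*\<^sup>* u u'}"
definition J :: "nat \<Rightarrow> nat \<Rightarrow> nat \<Rightarrow> bool" where
  "J z u u' \<longleftrightarrow> (\<exists>b b'. z \<le> b \<and> z \<le> b' \<and> E u b \<and> (ER z)\<^sup>*\<^sup>* b b' \<and> E b' u')"
definition Rk :: "(nat \<Rightarrow> bool \<times> bool) \<Rightarrow> nat \<Rightarrow> ((nat \<times> nat \<times> bool \<times> bool) \<times> (nat \<times> nat \<times> bool \<times> bool)) set" where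
  "Rk mk z = {(key mk z u, key mk z u') | u u'. u < z \<and> u' < z \<and> J z u u'}"
definition Ch :: "(nat \<Rightarrow> bool \<times> bool) \<Rightarrow> nat \<Rightarrow> ((nat \<times> nat \<times> bool \<times> bool) \<times> (nat \<times> nat \<times> bool \<times> bool)) set" where
  "Ch mk z = (Sig mk z O Rk mk z)\<^sup>* O Sig mk z"

lemma EL_rt_end: "(EL z)\<^sup>*\<^sup>* u w \<Longrightarrow> u \<noteq> w \<Longrightarrow> w < z"
  by (induction rule: rtranclp_induct) (auto simp: EL_def)

lemma EL_rt_start: "(EL z)\<^sup>*\<^sup>* u w \<Longrightarrow> u \<noteq> w \<Longrightarrow> u < z"
  by (induction rule: converse_rtranclp_induct) (auto simp: EL_def)

lemma EL_mono: "(EL z)\<^sup>*\<^sup>* u w \<Longrightarrow> z \<le> z' \<Longrightarrow> (EL z')\<^sup>*\<^sup>* u w"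
  by (induction rule: rtranclp_induct) (auto simp: EL_def intro: rtranclp.rtrancl_into_rtrancl)

definition reachz where "reachz z u \<longleftrightarrow> u = z \<or> (\<exists>w<z. (EL z)\<^sup>*\<^sup>* u w \<and> E w z)"
definition fromz where "fromz z u' \<longleftrightarrow> u' = z \<or> (\<exists>w<z. E z w \<and> (EL z)\<^sup>*\<^sup>* w u')"

lemma decomp:
  "(EL (Suc z))\<^sup>*\<^sup>* u u' \<Longrightarrow> u \<le> z \<Longrightarrow> (EL z)\<^sup>*\<^sup>* u u' \<or> (reachz z u \<and> fromz z u')"
proof (induction rule: rtranclp_induct)
  case base thus ?case by simp
next
  case (step w w')
  have ww: "w \<le> z" "w' \<le> z" "E w w'" using step(2) by (auto simp: EL_def)
  from step.IH[OF step.prems] show ?case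
  proof
    assume A: "(EL z)\<^sup>*\<^sup>* u w"
    show ?thesis
    proof (cases "w = z")
      case True
      then have "u = z" using A EL_rt_end by blast
      then have "reachz z u" by (simp add: reachz_def)
      moreover have "fromz z w'"
      proof (cases "w' = z")
        case False
        then have "w' < z" using ww by simp
        then show ?thesis using ww True unfolding fromz_def by blast
      qed (simp add: fromz_def)
      ultimately show ?thesis by simp
    next
      case False
      then have wz: "w < z" using ww by simp
      show ?thesis
      proof (cases "w' = z")
        case True
        then show ?thesis using A wz ww by (auto simp: reachz_def fromz_def)
      next
        case False
        then have "EL z w w'" using wz ww by (simp add: EL_def)
        then show ?thesis using A by (meson rtranclp.rtrancl_into_rtrancl)
      qed
    qed
  next
    assume B: "reachz z u \<and> fromz z w"
    have "fromz z w'"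
    proof (cases "w' = z")
      case True then show ?thesis by (simp add: fromz_def)
    next
      case False
      then have w'z: "w' < z" using ww by simp
      show ?thesis
      proof (cases "w = z")
        case True then show ?thesis using ww w'z by (auto simp: fromz_def)
      next
        case False
        then obtain w2 where "w2 < z" "E z w2" "(EL z)\<^sup>*\<^sup>* w2 w" using B by (auto simp: fromz_def)
        moreover have "EL z w w'" using False ww w'z by (simp add: EL_def)
        ultimately show ?thesis unfolding fromz_def by (meson rtranclp.rtrancl_into_rtrancl)
      qed
    qed
    then show ?thesis using B by simp
  qed
qed

lemma recomp:
  assumes "reachz z u" "fromz z u'"
  shows "(EL (Suc z))\<^sup>*\<^sup>* u u'"
proof -
  have 1: "(EL (Suc z))\<^sup>*\<^sup>* u z"
    using assms(1) unfolding reachz_def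
  proof
    assume "\<exists>w<z. (EL z)\<^sup>*\<^sup>* u w \<and> E w z"
    then obtain w where "w < z" "(EL z)\<^sup>*\<^sup>* u w" "E w z" by blast
    then have "(EL (Suc z))\<^sup>*\<^sup>* u w" "EL (Suc z) w z" using EL_mono[of z u w "Suc z"] by (auto simp: EL_def)
    then show ?thesis by (rule rtranclp.rtrancl_into_rtrancl)
  qed simp
  have 2: "(EL (Suc z))\<^sup>*\<^sup>* z u'"
    using assms(2) unfolding fromz_def
  proof
    assume "\<exists>w<z. E z w \<and> (EL z)\<^sup>*\<^sup>* w u'"
    then obtain w where "w < z" "(EL z)\<^sup>*\<^sup>* w u'" "E z w" by blast
    then have "(EL (Suc z))\<^sup>*\<^sup>* w u'" "EL (Suc z) z w" using EL_mono[of z w u' "Suc z"] by (auto simp: EL_def)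
    then show ?thesis by (rule converse_rtranclp_into_rtranclp[rotated])
  qed simp
  show ?thesis using 1 2 by simp
qed

lemma Sig_mem: "(a, b) \<in> Sig mk z \<longleftrightarrow> (\<exists>u u'. a = key mk z u \<and> b = key mk z u' \<and> u < z \<and> u' < z \<and> (EL z)\<^sup>*\<^sup>* u u')"
  unfolding Sig_def by blast

lemma Rk_mem: "(a, b) \<in> Rk mk z \<longleftrightarrow> (\<exists>u u'. a = key mk z u \<and> b = key mk z u' \<and> u < z \<and> u' < z \<and> J z u u')"
  unfolding Rk_def by blast

lemma key_Suc:
  assumes "u < z" "v < z'" "key mk z u = key mk' z' v"
  shows "key mk (Suc z) u = key mk' (Suc z') v"
proof -
  have "cls (z - u) = cls (z' - v)" using assms by (simp add: key_def)
  then have "cls (Suc (z - u)) = cls (Suc (z' - v))" by (rule cls_Suc)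
  then show ?thesis using assms by (simp add: key_def Suc_diff_le)
qed

lemma key_new:
  "cls z = cls z' \<Longrightarrow> mk z = mk' z' \<Longrightarrow> key mk (Suc z) z = key mk' (Suc z') z'"
  by (simp add: key_def)

lemma E_key:
  assumes "w < z" "v < z'" "key mk z w = key mk' z' v"
  shows "E w z = E v z' \<and> E z w = E z' v"
  using E_cls[of w z v z'] assms by (simp add: key_def)

lemma reach_transfer:
  assumes "cls z = cls z'" "mk z = mk' z'" "Sig mk z = Sig mk' z'"
    and "reachz z u" "u \<le> z"
  shows "\<exists>v\<le>z'. key mk' (Suc z') v = key mk (Suc z) u \<and> reachz z' v"
proof (cases "u = z")
  case True then show ?thesis using key_new[of z z' mk mk', OF assms(1,2)] by (auto simp: reachz_def)
next
  case False
  then have uz: "u < z" using assms by simp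
  from False assms(4) obtain w where w: "w < z" "(EL z)\<^sup>*\<^sup>* u w" "E w z" by (auto simp: reachz_def)
  then have "(key mk z u, key mk z w) \<in> Sig mk z" using uz by (auto simp: Sig_mem)
  then have "(key mk z u, key mk z w) \<in> Sig mk' z'" using assms(3) by simp
  then obtain v v1 where v: "key mk z u = key mk' z' v" "key mk z w = key mk' z' v1" "v < z'" "v1 < z'"
    "(EL z')\<^sup>*\<^sup>* v v1" by (auto simp: Sig_mem)
  have "E v1 z'" using E_key[OF w(1) v(4) v(2)] w(3) by simp
  then have "reachz z' v" using v by (auto simp: reachz_def)
  moreover have "key mk' (Suc z') v = key mk (Suc z) u" using key_Suc[OF uz v(3) v(1)] by simp
  ultimately show ?thesis using v(3) by (intro exI[of _ v]) auto
qed

lemma from_transfer: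
  assumes "cls z = cls z'" "mk z = mk' z'" "Sig mk z = Sig mk' z'"
    and "fromz z u" "u \<le> z"
  shows "\<exists>v\<le>z'. key mk' (Suc z') v = key mk (Suc z) u \<and> fromz z' v"
proof (cases "u = z")
  case True then show ?thesis using key_new[of z z' mk mk', OF assms(1,2)] by (auto simp: fromz_def)
next
  case False
  then have uz: "u < z" using assms by simp
  from False assms(4) obtain w where w: "w < z" "(EL z)\<^sup>*\<^sup>* w u" "E z w" by (auto simp: fromz_def)
  then have "(key mk z w, key mk z u) \<in> Sig mk z" using uz by (auto simp: Sig_mem)
  then have "(key mk z w, key mk z u) \<in> Sig mk' z'" using assms(3) by simp
  then obtain v v1 where v: "key mk z u = key mk' z' v" "key mk z w = key mk' z' v1" "v < z'" "v1 < z'"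
    "(EL z')\<^sup>*\<^sup>* v1 v" by (auto simp: Sig_mem)
  have "E z' v1" using E_key[OF w(1) v(4) v(2)] w(3) by simp
  then have "fromz z' v" using v by (auto simp: fromz_def)
  moreover have "key mk' (Suc z') v = key mk (Suc z) u" using key_Suc[OF uz v(3) v(1)] by simp
  ultimately show ?thesis using v(3) by (intro exI[of _ v]) auto
qed

lemma Sig_step:
  assumes "cls z = cls z'" "mk z = mk' z'" "Sig mk z = Sig mk' z'"
  shows "Sig mk (Suc z) \<subseteq> Sig mk' (Suc z')"
proof
  fix k assume "k \<in> Sig mk (Suc z)"
  then obtain u u' where uu: "k = (key mk (Suc z) u, key mk (Suc z) u')" "u \<le> z" "u' \<le> z"
    "(EL (Suc z))\<^sup>*\<^sup>* u u'" unfolding Sig_def by auto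
  from decomp[OF uu(4) uu(2)] show "k \<in> Sig mk' (Suc z')"
  proof
    assume A: "(EL z)\<^sup>*\<^sup>* u u'"
    show ?thesis
    proof (cases "u = z")
      case True
      then have "u' = z" using A EL_rt_start by blast
      have "(key mk' (Suc z') z', key mk' (Suc z') z') \<in> Sig mk' (Suc z')"
        unfolding Sig_def by (intro CollectI exI[of _ z'] exI[of _ z']) auto
      then show ?thesis using True \<open>u' = z\<close> uu key_new[of z z' mk mk', OF assms(1,2)] by simp
    next
      case False
      then have uz: "u < z" using uu by simp
      then have u'z: "u' < z" using A EL_rt_end by blast
      have "(key mk z u, key mk z u') \<in> Sig mk z" using uz u'z A by (auto simp: Sig_mem)
      then have "(key mk z u, key mk z u') \<in> Sig mk' z'" using assms(3) by simp
      then obtain v v' where v: "key mk z u = key mk' z' v" "key mk z u' = key mk' z' v'" "v < z'" "v' < z'"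
        "(EL z')\<^sup>*\<^sup>* v v'" by (auto simp: Sig_mem)
      have "(EL (Suc z'))\<^sup>*\<^sup>* v v'" using EL_mono[OF v(5)] by simp
      then have "(key mk' (Suc z') v, key mk' (Suc z') v') \<in> Sig mk' (Suc z')"
        using v unfolding Sig_def by (intro CollectI exI[of _ v] exI[of _ v']) auto
      then show ?thesis using key_Suc[OF uz v(3) v(1)] key_Suc[OF u'z v(4) v(2)] uu(1) by simp
    qed
  next
    assume B: "reachz z u \<and> fromz z u'"
    obtain v where v: "v \<le> z'" "key mk' (Suc z') v = key mk (Suc z) u" "reachz z' v"
      using reach_transfer[OF assms] B uu by blast
    obtain v' where v': "v' \<le> z'" "key mk' (Suc z') v' = key mk (Suc z) u'" "fromz z' v'"
      using from_transfer[OF assms] B uu by blast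
    have "(EL (Suc z'))\<^sup>*\<^sup>* v v'" using recomp v v' by blast
    then have "(key mk' (Suc z') v, key mk' (Suc z') v') \<in> Sig mk' (Suc z')"
      using v v' unfolding Sig_def by (intro CollectI exI[of _ v] exI[of _ v']) auto
    then show ?thesis using v v' uu(1) by simp
  qed
qed

lemma Sig_steps:
  "Sig mk z = Sig mk' z' \<Longrightarrow> (\<forall>i<n. cls (z+i) = cls (z'+i) \<and> mk (z+i) = mk' (z'+i))
   \<Longrightarrow> Sig mk (z+n) = Sig mk' (z'+n)"
proof (induction n)
  case (Suc n)
  then have IH: "Sig mk (z+n) = Sig mk' (z'+n)" by simp
  have c: "cls (z+n) = cls (z'+n)" "mk (z+n) = mk' (z'+n)" using Suc.prems by auto
  show ?case using Sig_step[OF c IH] Sig_step[OF c[symmetric] IH[symmetric]] by simp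
qed simp

lemma Sig_marks: "(\<forall>u<z. mk u = mk' u) \<Longrightarrow> Sig mk z = Sig mk' z"
proof -
  assume a: "\<forall>u<z. mk u = mk' u"
  have k: "key mk z u = key mk' z u" if "u < z" for u using a that by (simp add: key_def)
  show ?thesis unfolding Sig_def
  proof (intro Collect_cong iffI)
    fix x assume "\<exists>u u'. x = (key mk z u, key mk z u') \<and> u < z \<and> u' < z \<and> (EL z)\<^sup>*\<^sup>* u u'"
    then show "\<exists>u u'. x = (key mk' z u, key mk' z u') \<and> u < z \<and> u' < z \<and> (EL z)\<^sup>*\<^sup>* u u'"
      using k by metis
  next
    fix x assume "\<exists>u u'. x = (key mk' z u, key mk' z u') \<and> u < z \<and> u' < z \<and> (EL z)\<^sup>*\<^sup>* u u'"
    then show "\<exists>u u'. x = (key mk z u, key mk z u') \<and> u < z \<and> u' < z \<and> (EL z)\<^sup>*\<^sup>* u u'"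
      using k by metis
  qed
qed

lemma Sig_finite: "Sig mk z \<subseteq> ({0..<N+p} \<times> {0..<N+p} \<times> UNIV) \<times> ({0..<N+p} \<times> {0..<N+p} \<times> UNIV)"
  unfolding Sig_def key_def using cls_lt by auto

end

context per begin

lemma E_shift_dvd: "N \<le> x \<Longrightarrow> N \<le> y \<Longrightarrow> p dvd d \<Longrightarrow> E (x + d) (y + d) = E x y"
  by (auto elim!: dvdE simp: E_shift[of x y] mult.commute)

lemma ER_up: "(ER z)\<^sup>*\<^sup>* b b' \<Longrightarrow> N \<le> z \<Longrightarrow> p dvd d \<Longrightarrow> (ER (z+d))\<^sup>*\<^sup>* (b+d) (b'+d)"
proof (induction rule: rtranclp_induct)
  case (step c c')
  then have "ER (z+d) (c+d) (c'+d)" using E_shift_dvd[of c c' d] by (auto simp: ER_def)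
  then show ?case using step by (meson rtranclp.rtrancl_into_rtrancl)
qed simp

lemma ER_down: "(ER (z+d))\<^sup>*\<^sup>* b b' \<Longrightarrow> N \<le> z \<Longrightarrow> p dvd d \<Longrightarrow> (ER z)\<^sup>*\<^sup>* (b-d) (b'-d)"
proof (induction rule: rtranclp_induct)
  case (step c c')
  then have "E (c - d + d) (c' - d + d) = E (c-d) (c'-d)" using E_shift_dvd[of "c-d" "c'-d" d]
    by (auto simp: ER_def)
  then have "ER z (c-d) (c'-d)" using step by (auto simp: ER_def)
  then show ?case using step by (meson rtranclp.rtrancl_into_rtrancl)
qed simp

lemma J_transfer1:
  assumes "N \<le> z" "p dvd d" "u < z" "u' < z" "v < z+d" "v' < z+d"
    "cls u = cls v" "cls (z-u) = cls (z+d-v)" "cls u' = cls v'" "cls (z-u') = cls (z+d-v')"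
    "J z u u'"
  shows "J (z+d) v v'"
proof -
  obtain b b' where b: "z \<le> b" "z \<le> b'" "E u b" "(ER z)\<^sup>*\<^sup>* b b'" "E b' u'"
    using assms(11) by (auto simp: J_def)
  have c1: "cls (b - u) = cls (b + d - v)"
  proof -
    have "b - u = (z - u) + (b - z)" "b + d - v = (z + d - v) + (b - z)" using assms b by auto
    then show ?thesis using cls_add[OF assms(8)] by simp
  qed
  have c2: "cls (b' - u') = cls (b' + d - v')"
  proof -
    have "b' - u' = (z - u') + (b' - z)" "b' + d - v' = (z + d - v') + (b' - z)" using assms b by auto
    then show ?thesis using cls_add[OF assms(10)] by simp
  qed
  have "E v (b+d)" using E_cls[of u b v "b+d"] b assms c1 by auto
  moreover have "E (b'+d) v'" using E_cls[of u' b' v' "b'+d"] b assms c2 by auto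
  moreover have "(ER (z+d))\<^sup>*\<^sup>* (b+d) (b'+d)" using ER_up[OF b(4) assms(1,2)] .
  ultimately show ?thesis using b unfolding J_def by (intro exI[of _ "b+d"] exI[of _ "b'+d"]) auto
qed

lemma J_transfer2:
  assumes "N \<le> z" "p dvd d" "u < z" "u' < z" "v < z+d" "v' < z+d"
    "cls u = cls v" "cls (z-u) = cls (z+d-v)" "cls u' = cls v'" "cls (z-u') = cls (z+d-v')"
    "J (z+d) v v'"
  shows "J z u u'"
proof -
  obtain b b' where b: "z + d \<le> b" "z + d \<le> b'" "E v b" "(ER (z+d))\<^sup>*\<^sup>* b b'" "E b' v'"
    using assms(11) by (auto simp: J_def)
  have c1: "cls (b - d - u) = cls (b - v)"
  proof -
    have "b - d - u = (z - u) + (b - d - z)" "b - v = (z + d - v) + (b - d - z)" using assms b by auto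
    then show ?thesis using cls_add[OF assms(8)] by simp
  qed
  have c2: "cls (b' - d - u') = cls (b' - v')"
  proof -
    have "b' - d - u' = (z - u') + (b' - d - z)" "b' - v' = (z + d - v') + (b' - d - z)" using assms b by auto
    then show ?thesis using cls_add[OF assms(10)] by simp
  qed
  have "E u (b-d)" using E_cls[of u "b-d" v b] b assms c1 by auto
  moreover have "E (b'-d) u'" using E_cls[of u' "b'-d" v' b'] b assms c2 by auto
  moreover have "(ER z)\<^sup>*\<^sup>* (b-d) (b'-d)" using ER_down[OF b(4) assms(1,2)] .
  ultimately show ?thesis using b unfolding J_def by (intro exI[of _ "b-d"] exI[of _ "b'-d"]) auto
qed

lemma J_key:
  assumes "N \<le> z" "u < z" "u' < z" "v < z" "v' < z" "key mk z u = key mk' z v" "key mk z u' = key mk' z v'"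
    "J z u u'"
  shows "J z v v'"
  using J_transfer1[of z 0 u u' v v'] assms by (simp add: key_def)

lemma Rk_eq:
  assumes "N \<le> z" "p dvd d" "Sig mk z = Sig mk' (z+d)"
  shows "Rk mk z = Rk mk' (z+d)"
proof
  show "Rk mk z \<subseteq> Rk mk' (z+d)"
  proof
    fix k assume "k \<in> Rk mk z"
    then obtain u u' where u: "k = (key mk z u, key mk z u')" "u < z" "u' < z" "J z u u'"
      unfolding Rk_def by blast
    have "(key mk z u, key mk z u) \<in> Sig mk z" "(key mk z u', key mk z u') \<in> Sig mk z"
      using u unfolding Sig_def by blast+
    then have "(key mk z u, key mk z u) \<in> Sig mk' (z+d)" "(key mk z u', key mk z u') \<in> Sig mk' (z+d)"
      using assms(3) by auto
    then obtain v v' where v: "v < z+d" "key mk' (z+d) v = key mk z u" "v' < z+d" "key mk' (z+d) v' = key mk z u'"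
      unfolding Sig_mem by metis
    have "J (z+d) v v'"
      using J_transfer1[OF assms(1,2) u(2,3) v(1,3) _ _ _ _ u(4)] v by (simp add: key_def)
    then show "k \<in> Rk mk' (z+d)" using v u unfolding Rk_def by (intro CollectI exI[of _ v] exI[of _ v']) auto
  qed
next
  show "Rk mk' (z+d) \<subseteq> Rk mk z"
  proof
    fix k assume "k \<in> Rk mk' (z+d)"
    then obtain v v' where v: "k = (key mk' (z+d) v, key mk' (z+d) v')" "v < z+d" "v' < z+d" "J (z+d) v v'"
      unfolding Rk_def by blast
    have "(key mk' (z+d) v, key mk' (z+d) v) \<in> Sig mk' (z+d)" "(key mk' (z+d) v', key mk' (z+d) v') \<in> Sig mk' (z+d)"
      using v unfolding Sig_def by blast+
    then have "(key mk' (z+d) v, key mk' (z+d) v) \<in> Sig mk z" "(key mk' (z+d) v', key mk' (z+d) v') \<in> Sig mk z"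
      using assms(3) by auto
    then obtain u u' where u: "u < z" "key mk z u = key mk' (z+d) v" "u' < z" "key mk z u' = key mk' (z+d) v'"
      unfolding Sig_mem by metis
    have "J z u u'"
      using J_transfer2[OF assms(1,2) u(1,3) v(2,3) _ _ _ _ v(4)] u by (simp add: key_def)
    then show "k \<in> Rk mk z" using v u unfolding Rk_def by (intro CollectI exI[of _ u] exI[of _ u']) auto
  qed
qed

lemma Ch_eq:
  assumes "N \<le> z" "p dvd d" "Sig mk z = Sig mk' (z+d)"
  shows "Ch mk z = Ch mk' (z+d)"
  using Rk_eq[OF assms] assms(3) by (simp add: Ch_def)

definition G :: "nat \<Rightarrow> nat \<Rightarrow> nat \<Rightarrow> bool" where
  "G z a b \<longleftrightarrow> EL z a b \<or> (a < z \<and> b < z \<and> J z a b)"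

lemma ER_E: "(ER z)\<^sup>*\<^sup>* b b' \<Longrightarrow> E\<^sup>*\<^sup>* b b'"
  by (induction rule: rtranclp_induct) (auto simp: ER_def intro: rtranclp.rtrancl_into_rtrancl)

lemma G_E: "(G z)\<^sup>*\<^sup>* u u' \<Longrightarrow> E\<^sup>*\<^sup>* u u'"
proof (induction rule: rtranclp_induct)
  case (step w w')
  have "E\<^sup>*\<^sup>* w w'"
  proof (cases "EL z w w'")
    case True then show ?thesis by (auto simp: EL_def)
  next
    case False
    then obtain b b' where "E w b" "(ER z)\<^sup>*\<^sup>* b b'" "E b' w'" using step(2) by (auto simp: G_def J_def)
    then show ?thesis using ER_E
      by (meson converse_rtranclp_into_rtranclp rtranclp.rtrancl_into_rtrancl)
  qed
  then show ?case using step by simp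
qed simp

lemma E_G_aux:
  assumes "E\<^sup>*\<^sup>* u w" "u < z"
  shows "(w < z \<longrightarrow> (G z)\<^sup>*\<^sup>* u w) \<and>
         (z \<le> w \<longrightarrow> (\<exists>a b. a < z \<and> z \<le> b \<and> (G z)\<^sup>*\<^sup>* u a \<and> E a b \<and> (ER z)\<^sup>*\<^sup>* b w))"
  using assms(1)
proof (induction rule: rtranclp_induct)
  case base then show ?case using assms(2) by simp
next
  case (step w w')
  show ?case
  proof (cases "w < z")
    case True
    then have Gw: "(G z)\<^sup>*\<^sup>* u w" using step by simp
    show ?thesis
    proof (cases "w' < z")
      case True
      then have "G z w w'" using \<open>w < z\<close> step(2) by (simp add: G_def EL_def)
      then have "(G z)\<^sup>*\<^sup>* u w'" using Gw by (meson rtranclp.rtrancl_into_rtrancl)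
      then show ?thesis using True by simp
    next
      case False then show ?thesis using Gw \<open>w < z\<close> step(2)
        by (intro conjI impI exI[of _ w] exI[of _ w']) auto
    qed
  next
    case False
    then obtain a b where ab: "a < z" "z \<le> b" "(G z)\<^sup>*\<^sup>* u a" "E a b" "(ER z)\<^sup>*\<^sup>* b w" using step by auto
    show ?thesis
    proof (cases "w' < z")
      case True
      then have "J z a w'" using ab False step(2) unfolding J_def by (intro exI[of _ b] exI[of _ w]) auto
      then have "G z a w'" using ab True by (simp add: G_def)
      then have "(G z)\<^sup>*\<^sup>* u w'" using ab by (meson rtranclp.rtrancl_into_rtrancl)
      then show ?thesis using True by simp
    next
      case False
      then have "(ER z)\<^sup>*\<^sup>* b w'" using ab \<open>\<not> w < z\<close> step(2)
        by (meson ER_def not_less rtranclp.rtrancl_into_rtrancl)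
      then show ?thesis using ab False by auto
    qed
  qed
qed

lemma E_G: "E\<^sup>*\<^sup>* u u' \<Longrightarrow> u < z \<Longrightarrow> u' < z \<Longrightarrow> (G z)\<^sup>*\<^sup>* u u'"
  using E_G_aux by blast

lemma eval_fwd_aux:
  assumes "(G z)\<^sup>*\<^sup>* u w" "u < z"
  shows "\<exists>a<z. (key mk z u, key mk z a) \<in> (Sig mk z O Rk mk z)\<^sup>* \<and> (EL z)\<^sup>*\<^sup>* a w"
  using assms(1)
proof (induction rule: rtranclp_induct)
  case base then show ?case using assms(2) by blast
next
  case (step w w')
  then obtain a where a: "a < z" "(key mk z u, key mk z a) \<in> (Sig mk z O Rk mk z)\<^sup>*" "(EL z)\<^sup>*\<^sup>* a w" by blast
  show ?case
  proof (cases "EL z w w'")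
    case True then show ?thesis using a by (meson rtranclp.rtrancl_into_rtrancl)
  next
    case False
    then have w: "w < z" "w' < z" "J z w w'" using step(2) by (auto simp: G_def)
    have "(key mk z a, key mk z w) \<in> Sig mk z" using a w unfolding Sig_def by blast
    moreover have "(key mk z w, key mk z w') \<in> Rk mk z" using w unfolding Rk_def by blast
    ultimately have "(key mk z u, key mk z w') \<in> (Sig mk z O Rk mk z)\<^sup>*"
      using a(2) by (meson relcomp.relcompI rtrancl.rtrancl_into_rtrancl)
    then show ?thesis using w by blast
  qed
qed

lemma eval_bwd_aux:
  assumes "(k0, k) \<in> (Sig mk z O Rk mk z)\<^sup>*" "k0 = key mk z x" "x < z" "N \<le> z"
    "\<And>a. fst (mk a) \<longleftrightarrow> a = x"
  shows "\<forall>a<z. key mk z a = k \<longrightarrow> (G z)\<^sup>*\<^sup>* x a"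
  using assms(1)
proof (induction rule: rtrancl_induct)
  case base
  show ?case
  proof (intro allI impI)
    fix a assume "a < z" "key mk z a = k0"
    then have "mk a = mk x" using assms(2) by (simp add: key_def)
    then have "a = x" using assms(5)[of a] assms(5)[of x] by simp
    then show "(G z)\<^sup>*\<^sup>* x a" by simp
  qed
next
  case (step k1 k2)
  then obtain km where km: "(k1, km) \<in> Sig mk z" "(km, k2) \<in> Rk mk z" by blast
  obtain u1 u2 where u: "u1 < z" "u2 < z" "key mk z u1 = k1" "key mk z u2 = km" "(EL z)\<^sup>*\<^sup>* u1 u2"
    using km(1) unfolding Sig_mem by metis
  obtain u3 u4 where u': "u3 < z" "u4 < z" "key mk z u3 = km" "key mk z u4 = k2" "J z u3 u4"
    using km(2) unfolding Rk_mem by metis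
  show ?case
  proof (intro allI impI)
    fix a assume a: "a < z" "key mk z a = k2"
    have "(G z)\<^sup>*\<^sup>* x u1" using step.IH u by blast
    moreover have "(G z)\<^sup>*\<^sup>* u1 u2" using u(5)
      by (induction rule: rtranclp_induct) (auto simp: G_def intro: rtranclp.rtrancl_into_rtrancl)
    moreover have "J z u2 a" using J_key[OF assms(4) u'(1,2) u(2) a(1) _ _ u'(5), of mk mk] u u' a by simp
    then have "G z u2 a" using u a by (simp add: G_def)
    ultimately show "(G z)\<^sup>*\<^sup>* x a" by (meson rtranclp.rtrancl_into_rtrancl rtranclp_trans)
  qed
qed

lemma eval:
  assumes "N \<le> z" "x < z" "y < z" "\<And>a. mk a = (a = x, a = y)"
  shows "E\<^sup>*\<^sup>* x y \<longleftrightarrow> (key mk z x, key mk z y) \<in> Ch mk z"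
proof
  assume "E\<^sup>*\<^sup>* x y"
  then have "(G z)\<^sup>*\<^sup>* x y" using E_G assms by blast
  then obtain a where a: "a < z" "(key mk z x, key mk z a) \<in> (Sig mk z O Rk mk z)\<^sup>*" "(EL z)\<^sup>*\<^sup>* a y"
    using eval_fwd_aux assms by blast
  have "(key mk z a, key mk z y) \<in> Sig mk z" using a assms unfolding Sig_def by blast
  then show "(key mk z x, key mk z y) \<in> Ch mk z" using a unfolding Ch_def by blast
next
  assume "(key mk z x, key mk z y) \<in> Ch mk z"
  then obtain k where k: "(key mk z x, k) \<in> (Sig mk z O Rk mk z)\<^sup>*" "(k, key mk z y) \<in> Sig mk z"
    unfolding Ch_def by blast
  obtain u1 u2 where u: "u1 < z" "u2 < z" "key mk z u1 = k" "key mk z u2 = key mk z y" "(EL z)\<^sup>*\<^sup>* u1 u2"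
    using k(2) unfolding Sig_mem by metis
  have "u2 = y" using u(4) assms(4)[of u2] assms(4)[of y] by (simp add: key_def)
  have "(G z)\<^sup>*\<^sup>* x u1" using eval_bwd_aux[OF k(1) refl assms(2,1)] assms(4) u by simp
  moreover have "(G z)\<^sup>*\<^sup>* u1 u2" using u(5)
    by (induction rule: rtranclp_induct) (auto simp: G_def intro: rtranclp.rtrancl_into_rtrancl)
  ultimately have "(G z)\<^sup>*\<^sup>* x y" using \<open>u2 = y\<close> by simp
  then show "E\<^sup>*\<^sup>* x y" by (rule G_E)
qed

end

lemma ev_periodic:
  fixes s :: "nat \<Rightarrow> 'a"
  assumes A: "finite A" "\<forall>i\<ge>a. s i \<in> A"
    and det: "\<And>i j. a \<le> i \<Longrightarrow> a \<le> j \<Longrightarrow> s i = s j \<Longrightarrow> s (Suc i) = s (Suc j)"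
  shows "\<forall>t\<ge>a + card A. s (t + fact (card A)) = s t"
proof -
  define C where "C = card A"
  have "\<not> inj_on s {a..a+C}"
  proof
    assume "inj_on s {a..a+C}"
    moreover have "s ` {a..a+C} \<subseteq> A" using A by auto
    ultimately have "card {a..a+C} \<le> card A" using A(1) card_inj_on_le by blast
    then show False by (simp add: C_def)
  qed
  then obtain i j where ij: "i \<in> {a..a+C}" "j \<in> {a..a+C}" "i < j" "s i = s j"
    unfolding inj_on_def by (metis linorder_neqE_nat)
  define d where "d = j - i"
  have d: "0 < d" "d \<le> C" using ij by (auto simp: d_def)
  have per1: "s (i + t + d) = s (i + t)" for t
  proof (induction t)
    case 0 then show ?case using ij by (simp add: d_def)
  next
    case (Suc t)
    have "s (Suc (i + t + d)) = s (Suc (i + t))"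
      using det[of "i + t + d" "i + t"] Suc ij by auto
    then show ?case by simp
  qed
  have perk: "s (i + t + k * d) = s (i + t)" for t k
  proof (induction k)
    case (Suc k)
    have "s (i + t + Suc k * d) = s (i + (t + k * d) + d)" by (simp add: algebra_simps)
    also have "\<dots> = s (i + t + k * d)" using per1[of "t + k*d"] by (simp add: algebra_simps)
    finally show ?case using Suc by simp
  qed simp
  have "d dvd fact C" using d by (intro dvd_fact) auto
  then obtain k where k: "fact C = k * d" by (metis dvd_def mult.commute)
  show ?thesis
  proof (intro allI impI)
    fix t assume "a + card A \<le> t"
    then have "t = i + (t - i)" using ij by (auto simp: C_def)
    then show "s (t + fact (card A)) = s t" using perk[of "t - i" k] k by (metis C_def)
  qed
qed

context per begin

lemma cls_modeq: "N \<le> i \<Longrightarrow> N \<le> j \<Longrightarrow> i mod p = j mod p \<Longrightarrow> cls i = cls j"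
proof -
  have *: "cls i = cls j" if "N \<le> i" "i \<le> j" "i mod p = j mod p" for i j
  proof -
    have "p dvd (j - i)" using mod_eq_dvd_iff_nat[of i j p] that by simp
    then have "cls (i + (j - i)) = cls i" using cls_shift[of i "j - i"] that by simp
    then show ?thesis using that by simp
  qed
  assume a: "N \<le> i" "N \<le> j" "i mod p = j mod p"
  show "cls i = cls j"
  proof (cases "i \<le> j")
    case True then show ?thesis using *[of i j] a by blast
  next
    case False then have "cls j = cls i" using *[of j i] a by simp
    then show ?thesis by simp
  qed
qed

definition KS :: "(nat \<times> nat \<times> bool \<times> bool) set" where
  "KS = {0..<N+p} \<times> {0..<N+p} \<times> UNIV"
definition AS where "AS = Pow (KS \<times> KS) \<times> {0..<p}"
definition CC :: nat where "CC = card AS"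
definition PP :: nat where "PP = fact CC"

lemma KS_finite: "finite KS"
  unfolding KS_def by (intro finite_cartesian_product) auto

lemma AS_finite: "finite AS"
  unfolding AS_def using KS_finite by simp

lemma p_le_CC: "p \<le> CC"
proof -
  have "card (Pow (KS \<times> KS)) = 2 ^ card (KS \<times> KS)" using KS_finite by (simp add: card_Pow)
  then have "card (Pow (KS \<times> KS)) \<ge> 1" by simp
  moreover have "CC = card (Pow (KS \<times> KS)) * p"
    unfolding CC_def AS_def by (simp add: card_cartesian_product)
  ultimately show ?thesis by simp
qed

lemma p_dvd_PP: "p dvd PP"
  unfolding PP_def using p_le_CC p_pos by (intro dvd_fact) auto

lemma PP_pos: "PP > 0" unfolding PP_def by (rule fact_gt_zero)

lemma Sig_periodic:
  assumes "N \<le> a0" "\<forall>i\<ge>a0. mk i = (False, False)"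
  shows "\<forall>z\<ge>a0 + CC. Sig mk (z + PP) = Sig mk z"
proof -
  define s where "s z = (Sig mk z, z mod p)" for z
  have inA: "\<forall>i\<ge>a0. s i \<in> AS"
  proof (intro allI impI)
    fix i
    have "Sig mk i \<subseteq> KS \<times> KS" using Sig_finite[of mk i] unfolding KS_def .
    moreover have "i mod p < p" using p_pos by simp
    ultimately show "s i \<in> AS" unfolding s_def AS_def by simp
  qed
  have det: "s (Suc i) = s (Suc j)" if "a0 \<le> i" "a0 \<le> j" "s i = s j" for i j
  proof -
    have e: "Sig mk i = Sig mk j" "i mod p = j mod p" using that by (auto simp: s_def)
    have c: "cls i = cls j" using assms(1) that e(2) by (intro cls_modeq) auto
    have m: "mk i = mk j" using assms that by auto
    have "Sig mk (Suc i) = Sig mk (Suc j)"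
      using Sig_step[OF c m e(1)] Sig_step[OF c[symmetric] m[symmetric] e(1)[symmetric]] by simp
    moreover have "Suc i mod p = Suc j mod p" using e(2) by (metis mod_Suc_eq)
    ultimately show ?thesis by (simp add: s_def)
  qed
  have "\<forall>t\<ge>a0 + card AS. s (t + fact (card AS)) = s t"
    by (rule ev_periodic[OF AS_finite inA det]) auto
  then show ?thesis by (simp add: s_def CC_def PP_def)
qed

abbreviation mkxy :: "nat \<Rightarrow> nat \<Rightarrow> nat \<Rightarrow> bool \<times> bool" where
  "mkxy x y \<equiv> (\<lambda>a. (a = x, a = y))"

lemma QH1:
  assumes "N + CC + 1 \<le> x" "N + CC + 1 \<le> y"
  shows "E\<^sup>*\<^sup>* (x + PP) (y + PP) = E\<^sup>*\<^sup>* x y"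
proof -
  define m where "m = min x y"
  define z where "z = Suc (max x y)"
  define n where "n = z - m"
  have mz: "m + n = z" "N \<le> m" "N + CC \<le> m" using assms by (auto simp: m_def z_def n_def)
  have "Sig (mkxy x y) m = Sig (\<lambda>a. (False, False)) m"
    by (rule Sig_marks) (auto simp: m_def)
  also have "\<dots> = Sig (\<lambda>a. (False, False)) (m + PP)"
    using Sig_periodic[of N "\<lambda>a. (False, False)"] mz by auto
  also have "\<dots> = Sig (mkxy (x+PP) (y+PP)) (m + PP)"
    by (rule Sig_marks) (auto simp: m_def)
  finally have S0: "Sig (mkxy x y) m = Sig (mkxy (x+PP) (y+PP)) (m + PP)" .
  have "Sig (mkxy x y) (m + n) = Sig (mkxy (x+PP) (y+PP)) (m + PP + n)"
  proof (rule Sig_steps[OF S0], intro allI impI conjI)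
    fix i assume "i < n"
    show "cls (m + i) = cls (m + PP + i)"
      using cls_shift[of "m+i" PP] p_dvd_PP mz by (simp add: algebra_simps)
    show "(m + i = x, m + i = y) = (m + PP + i = x + PP, m + PP + i = y + PP)" by auto
  qed
  then have "Sig (mkxy x y) z = Sig (mkxy (x+PP) (y+PP)) (m + PP + n)" using mz(1) by simp
  moreover have "m + PP + n = z + PP" using mz(1) by simp
  ultimately have S1: "Sig (mkxy x y) z = Sig (mkxy (x+PP) (y+PP)) (z + PP)" by simp
  have zN: "N \<le> z" using mz by (auto simp: z_def m_def)
  have Ch: "Ch (mkxy x y) z = Ch (mkxy (x+PP) (y+PP)) (z + PP)"
    using Ch_eq[OF zN p_dvd_PP S1] .
  have k1: "key (mkxy x y) z x = key (mkxy (x+PP) (y+PP)) (z + PP) (x + PP)"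
    using cls_shift[of x PP] p_dvd_PP assms by (simp add: key_def)
  have k2: "key (mkxy x y) z y = key (mkxy (x+PP) (y+PP)) (z + PP) (y + PP)"
    using cls_shift[of y PP] p_dvd_PP assms by (simp add: key_def)
  have "E\<^sup>*\<^sup>* x y \<longleftrightarrow> (key (mkxy x y) z x, key (mkxy x y) z y) \<in> Ch (mkxy x y) z"
    by (rule eval) (use zN in \<open>auto simp: z_def\<close>)
  moreover have "E\<^sup>*\<^sup>* (x+PP) (y+PP) \<longleftrightarrow> (key (mkxy (x+PP) (y+PP)) (z+PP) (x+PP), key (mkxy (x+PP) (y+PP)) (z+PP) (y+PP)) \<in> Ch (mkxy (x+PP) (y+PP)) (z+PP)"
    by (rule eval) (use zN in \<open>auto simp: z_def\<close>)
  ultimately show ?thesis using Ch k1 k2 by simp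
qed

lemma QH2:
  assumes "x + (N + CC + 1) \<le> y"
  shows "E\<^sup>*\<^sup>* x (y + PP) = E\<^sup>*\<^sup>* x y"
proof -
  define a0 where "a0 = x + 1 + N"
  have "\<forall>z\<ge>a0 + CC. Sig (\<lambda>a. (a = x, False)) (z + PP) = Sig (\<lambda>a. (a = x, False)) z"
    by (rule Sig_periodic) (auto simp: a0_def)
  then have P: "Sig (\<lambda>a. (a = x, False)) (y + PP) = Sig (\<lambda>a. (a = x, False)) y"
    using assms by (auto simp: a0_def)
  have "Sig (mkxy x y) y = Sig (\<lambda>a. (a = x, False)) y" by (rule Sig_marks) auto
  also have "\<dots> = Sig (\<lambda>a. (a = x, False)) (y + PP)" using P by simp
  also have "\<dots> = Sig (mkxy x (y+PP)) (y + PP)" by (rule Sig_marks) auto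
  finally have S0: "Sig (mkxy x y) y = Sig (mkxy x (y+PP)) (y + PP)" .
  have c: "cls y = cls (y + PP)" using cls_shift[of y PP] p_dvd_PP assms by simp
  have m: "mkxy x y y = mkxy x (y+PP) (y+PP)" using assms by auto
  have "Sig (mkxy x y) (Suc y) = Sig (mkxy x (y+PP)) (Suc (y + PP))"
    using Sig_step[OF c m S0] Sig_step[OF c[symmetric] m[symmetric] S0[symmetric]] by simp
  then have S1: "Sig (mkxy x y) (Suc y) = Sig (mkxy x (y+PP)) (Suc y + PP)" by simp
  have zN: "N \<le> Suc y" using assms by simp
  have Ch: "Ch (mkxy x y) (Suc y) = Ch (mkxy x (y+PP)) (Suc y + PP)"
    using Ch_eq[OF zN p_dvd_PP S1] .
  have k1: "key (mkxy x y) (Suc y) x = key (mkxy x (y+PP)) (Suc y + PP) x"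
  proof -
    have "cls (Suc y - x + PP) = cls (Suc y - x)" using cls_shift[of "Suc y - x" PP] p_dvd_PP assms by simp
    moreover have "Suc y + PP - x = Suc y - x + PP" using assms by simp
    ultimately show ?thesis using assms by (simp add: key_def)
  qed
  have k2: "key (mkxy x y) (Suc y) y = key (mkxy x (y+PP)) (Suc y + PP) (y + PP)"
    using c assms by (simp add: key_def Suc_diff_le)
  have "E\<^sup>*\<^sup>* x y \<longleftrightarrow> (key (mkxy x y) (Suc y) x, key (mkxy x y) (Suc y) y) \<in> Ch (mkxy x y) (Suc y)"
    by (rule eval) (use zN assms in auto)
  moreover have "E\<^sup>*\<^sup>* x (y+PP) \<longleftrightarrow> (key (mkxy x (y+PP)) (Suc y + PP) x, key (mkxy x (y+PP)) (Suc y + PP) (y+PP)) \<in> Ch (mkxy x (y+PP)) (Suc y + PP)"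
    by (rule eval) (use zN assms in auto)
  ultimately show ?thesis using Ch k1 k2 by simp
qed

lemma QH3:
  assumes "y + (N + CC + 1) \<le> x"
  shows "E\<^sup>*\<^sup>* (x + PP) y = E\<^sup>*\<^sup>* x y"
proof -
  define a0 where "a0 = y + 1 + N"
  have "\<forall>z\<ge>a0 + CC. Sig (\<lambda>a. (False, a = y)) (z + PP) = Sig (\<lambda>a. (False, a = y)) z"
    by (rule Sig_periodic) (auto simp: a0_def)
  then have P: "Sig (\<lambda>a. (False, a = y)) (x + PP) = Sig (\<lambda>a. (False, a = y)) x"
    using assms by (auto simp: a0_def)
  have "Sig (mkxy x y) x = Sig (\<lambda>a. (False, a = y)) x" by (rule Sig_marks) auto
  also have "\<dots> = Sig (\<lambda>a. (False, a = y)) (x + PP)" using P by simp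
  also have "\<dots> = Sig (mkxy (x+PP) y) (x + PP)" by (rule Sig_marks) auto
  finally have S0: "Sig (mkxy x y) x = Sig (mkxy (x+PP) y) (x + PP)" .
  have c: "cls x = cls (x + PP)" using cls_shift[of x PP] p_dvd_PP assms by simp
  have m: "mkxy x y x = mkxy (x+PP) y (x+PP)" using assms by auto
  have "Sig (mkxy x y) (Suc x) = Sig (mkxy (x+PP) y) (Suc (x + PP))"
    using Sig_step[OF c m S0] Sig_step[OF c[symmetric] m[symmetric] S0[symmetric]] by simp
  then have S1: "Sig (mkxy x y) (Suc x) = Sig (mkxy (x+PP) y) (Suc x + PP)" by simp
  have zN: "N \<le> Suc x" using assms by simp
  have Ch: "Ch (mkxy x y) (Suc x) = Ch (mkxy (x+PP) y) (Suc x + PP)"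
    using Ch_eq[OF zN p_dvd_PP S1] .
  have k2: "key (mkxy x y) (Suc x) y = key (mkxy (x+PP) y) (Suc x + PP) y"
  proof -
    have "cls (Suc x - y + PP) = cls (Suc x - y)" using cls_shift[of "Suc x - y" PP] p_dvd_PP assms by simp
    moreover have "Suc x + PP - y = Suc x - y + PP" using assms by simp
    ultimately show ?thesis using assms by (simp add: key_def)
  qed
  have k1: "key (mkxy x y) (Suc x) x = key (mkxy (x+PP) y) (Suc x + PP) (x + PP)"
    using c assms by (simp add: key_def Suc_diff_le)
  have "E\<^sup>*\<^sup>* x y \<longleftrightarrow> (key (mkxy x y) (Suc x) x, key (mkxy x y) (Suc x) y) \<in> Ch (mkxy x y) (Suc x)"
    by (rule eval) (use zN assms in auto)
  moreover have "E\<^sup>*\<^sup>* (x+PP) y \<longleftrightarrow> (key (mkxy (x+PP) y) (Suc x + PP) (x+PP), key (mkxy (x+PP) y) (Suc x + PP) y) \<in> Ch (mkxy (x+PP) y) (Suc x + PP)"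
    by (rule eval) (use zN assms in auto)
  ultimately show ?thesis using Ch k1 k2 by simp
qed

lemma rtc_per: "per (E\<^sup>*\<^sup>*) (N + CC + 1) PP"
  by unfold_locales (use PP_pos QH1 QH2 QH3 in auto)

end

definition Wd :: "nat \<Rightarrow> nat \<Rightarrow> unit option list list" where
  "Wd m n = map (\<lambda>j. [if j < m then Some () else None, if j < n then Some () else None]) [0..<max m n]"

abbreviation "dd \<equiv> [Some (), Some ()]"
abbreviation "sn \<equiv> [Some (), None]"
abbreviation "nu \<equiv> [None, Some ()]"

lemma Wd_form: "Wd m n = replicate (min m n) dd @ replicate (m - n) sn @ replicate (n - m) nu"
  by (rule nth_equalityI) (auto simp: Wd_def nth_append min_def max_def)

lemma conv_Wd: "conv [u, v :: unit list] = Wd (length u) (length v)"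
  by (simp add: conv_def maxlen_def Wd_def)

lemma Wd_len: "length (Wd m n) = max m n"
  by (simp add: Wd_def)

lemma Wd_nth: "j < max m n \<Longrightarrow> Wd m n ! j = [if j < m then Some () else None, if j < n then Some () else None]"
  by (simp add: Wd_def)

lemma Wd_inj: "Wd m n = Wd m' n' \<Longrightarrow> m = m' \<and> n = n'"
proof -
  assume eq: "Wd m n = Wd m' n'"
  then have len: "max m n = max m' n'" by (metis Wd_len)
  have A: "a = a'" if "\<And>j. j < max m n \<Longrightarrow> (j < a) = (j < a')" "a \<le> max m n" "a' \<le> max m n" for a a'
  proof (rule ccontr)
    assume "a \<noteq> a'"
    then consider "a < a'" | "a' < a" by linarith
    then show False
    proof cases
      case 1 then show False using that(1)[of a] that(3) by simp
    next
      case 2 then show False using that(1)[of a'] that(2) by simp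
    qed
  qed
  have e: "Wd m n ! j = Wd m' n' ! j" for j using eq by simp
  have "(j < m) = (j < m') \<and> (j < n) = (j < n')" if "j < max m n" for j
    using e[of j] Wd_nth[OF that] Wd_nth[of j m' n'] that len by (auto split: if_splits)
  then show ?thesis using A[of m m'] A[of n n'] len by auto
qed

lemma Wd_lists: "Wd m n \<in> lists (conv_alphabet {()} 2)"
  by (auto simp: Wd_def conv_alphabet_def)

lemma unit_list_rep: "replicate (length (u :: unit list)) () = u"
  by (rule replicate_length_same) simp

lemma Lambda_conv:
  "conv ` Lambda (lists {()}) phi 2 R = {Wd m n | m n. R [phi (replicate m ()), phi (replicate n ())]}"
proof (intro set_eqI iffI)
  fix w assume "w \<in> conv ` Lambda (lists {()}) phi 2 R"
  then obtain ws where ws: "w = conv ws" "length ws = 2" "R (map phi ws)"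
    by (auto simp: Lambda_def)
  then obtain u v where uv: "ws = [u, v]"
    by (metis (no_types, opaque_lifting) Suc_length_conv length_0_conv numeral_2_eq_2)
  show "w \<in> {Wd m n | m n. R [phi (replicate m ()), phi (replicate n ())]}"
    using ws uv conv_Wd[of u v] unit_list_rep[of u] unit_list_rep[of v]
    by (intro CollectI exI[of _ "length u"] exI[of _ "length v"]) auto
next
  fix w assume "w \<in> {Wd m n | m n. R [phi (replicate m ()), phi (replicate n ())]}"
  then obtain m n where mn: "w = Wd m n" "R [phi (replicate m ()), phi (replicate n ())]" by blast
  have "[replicate m (), replicate n ()] \<in> Lambda (lists {()}) phi 2 R"
    using mn by (auto simp: Lambda_def)
  moreover have "conv [replicate m (), replicate n ()] = w" using mn conv_Wd by simp
  ultimately show "w \<in> conv ` Lambda (lists {()}) phi 2 R" by (metis image_eqI)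
qed

lemma conv_alph_finite: "finite (conv_alphabet {()} 2)"
proof -
  have "conv_alphabet {()} 2 = {xs. set xs \<subseteq> Some ` {()} \<union> {None} \<and> length xs = 2}"
    by (auto simp: conv_alphabet_def)
  then show ?thesis using finite_lists_length_eq[of "Some ` {()} \<union> {None}" 2] by simp
qed

lemma foldl_rep: "foldl d q (replicate k l) = ((\<lambda>q. d q l) ^^ k) q"
  by (induction k arbitrary: q) (simp_all add: funpow_Suc_right del: funpow.simps)

lemma reg_per:
  assumes "regular_lang (conv_alphabet {()} 2) {Wd m n | m n. E m n}"
  shows "\<exists>N p. per E N p"
proof -
  define Al where "Al = conv_alphabet {()} 2"
  have "\<exists>(Q::nat set) d q0 F. finite Q \<and> q0 \<in> Q \<and> (\<forall>q\<in>Q. \<forall>x\<in>Al. d q x \<in> Q) \<and>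
    {Wd m n | m n. E m n} = {w \<in> lists Al. foldl d q0 w \<in> F}"
    using assms unfolding regular_lang_def Al_def by (elim conjE)
  then obtain Q :: "nat set" and d q0 F where dfa: "finite Q" "q0 \<in> Q" "\<forall>q\<in>Q. \<forall>x\<in>Al. d q x \<in> Q"
    "{Wd m n | m n. E m n} = {w \<in> lists Al. foldl d q0 w \<in> F}"
    by (elim exE conjE) (rule that)
  have mem: "w \<in> {Wd m n | m n. E m n} \<longleftrightarrow> w \<in> lists Al \<and> foldl d q0 w \<in> F" for w
    by (subst dfa(4)) simp
  have inW: "Wd m n \<in> {Wd m n | m n. E m n} \<longleftrightarrow> E m n" for m n
  proof
    assume "Wd m n \<in> {Wd m n | m n. E m n}"
    then obtain m' n' where "Wd m n = Wd m' n'" "E m' n'" by blast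
    then show "E m n" using Wd_inj by metis
  qed blast
  have EF: "E m n \<longleftrightarrow> foldl d q0 (Wd m n) \<in> F" for m n
    using mem[of "Wd m n"] inW[of m n] Wd_lists[of m n] by (simp add: Al_def)
  define it where "it l q k = ((\<lambda>q. d q l) ^^ k) q" for l q k
  have itQ: "it l q k \<in> Q" if "q \<in> Q" "l \<in> Al" for l q k
    using that by (induction k) (auto simp: it_def dfa(3))
  define C where "C = card Q"
  have per_it: "\<forall>k\<ge>C. it l q (k + fact C) = it l q k" if "q \<in> Q" "l \<in> Al" for l q
  proof -
    have "\<forall>t\<ge>0 + card Q. it l q (t + fact (card Q)) = it l q t"
      by (rule ev_periodic[OF dfa(1)]) (use itQ that in \<open>auto simp: it_def\<close>)
    then show ?thesis by (simp add: C_def)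
  qed
  have lets: "dd \<in> Al" "sn \<in> Al" "nu \<in> Al" by (auto simp: Al_def conv_alphabet_def)
  have EW: "E m n \<longleftrightarrow> it nu (it sn (it dd q0 (min m n)) (m - n)) (n - m) \<in> F" for m n
    using EF[of m n] by (simp add: Wd_form foldl_rep it_def)
  have Cpos: "0 < C" using dfa(1,2) by (auto simp: C_def card_gt_0_iff)
  show ?thesis
  proof (rule exI[of _ C], rule exI[of _ "fact C :: nat"], unfold_locales)
    show "0 < (fact C :: nat)" by simp
  next
    fix x y assume xy: "C \<le> x" "C \<le> y"
    have "min (x + fact C) (y + fact C) = min x y + fact C" by simp
    moreover have "it dd q0 (min x y + fact C) = it dd q0 (min x y)"
      using per_it[OF dfa(2) lets(1)] xy by simp
    ultimately show "E (x + fact C) (y + fact C) = E x y" using EW by simp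
  next
    fix x y assume xy: "x + C \<le> y"
    have q: "it dd q0 x \<in> Q" using itQ dfa(2) lets by blast
    have "it nu (it dd q0 x) ((y - x) + fact C) = it nu (it dd q0 x) (y - x)"
      by (rule per_it[OF q lets(3), rule_format]) (use xy in simp)
    moreover have "y + fact C - x = (y - x) + fact C" using xy by simp
    moreover have "min x (y + fact C) = x" "min x y = x" "x - (y + fact C) = 0" "x - y = 0" using xy by auto
    moreover have "it l q 0 = q" for l q by (simp add: it_def)
    ultimately show "E x (y + fact C) = E x y" using EW[of x "y + fact C"] EW[of x y]
      by (simp only:)
  next
    fix x y assume xy: "y + C \<le> x"
    have q: "it dd q0 y \<in> Q" using itQ dfa(2) lets by blast
    have "it sn (it dd q0 y) ((x - y) + fact C) = it sn (it dd q0 y) (x - y)"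
      by (rule per_it[OF q lets(2), rule_format]) (use xy in simp)
    moreover have "x + fact C - y = (x - y) + fact C" using xy by simp
    moreover have "min (x + fact C) y = y" "min x y = y" "y - (x + fact C) = 0" "y - x = 0" using xy by auto
    moreover have "it l q 0 = q" for l q by (simp add: it_def)
    ultimately show "E (x + fact C) y = E x y" using EW[of "x + fact C" y] EW[of x y]
      by (simp only:)
  qed
qed

lemma reg_from_dfa:
  fixes dl :: "'b::countable \<Rightarrow> 'a \<Rightarrow> 'b"
  assumes "finite Al" "L \<subseteq> lists Al" "finite Qs" "q0 \<in> Qs" "\<forall>q\<in>Qs. \<forall>x\<in>Al. dl q x \<in> Qs"
    "L = {w \<in> lists Al. foldl dl q0 w \<in> F}"
  shows "regular_lang Al L"
proof -
  define d' where "d' n x = to_nat (dl (from_nat n) x)" for n x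
  have f: "foldl d' (to_nat q) w = to_nat (foldl dl q w)" for q w
    by (induction w arbitrary: q) (simp_all add: d'_def)
  have mem: "to_nat a \<in> to_nat ` F \<longleftrightarrow> a \<in> F" for a
    by (rule inj_image_mem_iff) simp
  have L: "L = {w \<in> lists Al. foldl d' (to_nat q0) w \<in> to_nat ` F}"
    using assms(6) by (simp add: f mem)
  have cl: "\<forall>q\<in>to_nat ` Qs. \<forall>x\<in>Al. d' q x \<in> to_nat ` Qs" using assms(5) by (auto simp: d'_def)
  show ?thesis unfolding regular_lang_def
    apply (intro conjI assms(1,2))
    apply (rule exI[of _ "to_nat ` Qs"], rule exI[of _ d'], rule exI[of _ "to_nat q0"], rule exI[of _ "to_nat ` F"])
    using assms(3,4) cl L by auto
qed

datatype st = Dg nat | Rt nat nat | Lt nat nat | Dead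

instance st :: countable by countable_datatype

context per begin

fun dstep :: "st \<Rightarrow> unit option list \<Rightarrow> st" where
  "dstep (Dg c) l = (if l = dd then Dg (cls (Suc c)) else if l = nu then Rt c (cls 1)
      else if l = sn then Lt c (cls 1) else Dead)"
| "dstep (Rt c d) l = (if l = nu then Rt c (cls (Suc d)) else Dead)"
| "dstep (Lt c d) l = (if l = sn then Lt c (cls (Suc d)) else Dead)"
| "dstep Dead l = Dead"

definition FS :: "st set" where
  "FS = {Dg c | c. E c c} \<union> {Rt c d | c d. E c (c + d)} \<union> {Lt c d | c d. E (c + d) c}"

definition QS :: "st set" where
  "QS = {s. case s of Dg c \<Rightarrow> c < N+p | Rt c d \<Rightarrow> c < N+p \<and> d < N+p | Lt c d \<Rightarrow> c < N+p \<and> d < N+p | Dead \<Rightarrow> True}"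

lemma cls_Suc_cls: "cls (Suc (cls j)) = cls (Suc j)"
  using cls_Suc[OF cls_cls] .

lemma run_dd: "foldl dstep (Dg (cls j)) (replicate k dd) = Dg (cls (j + k))"
proof (induction k arbitrary: j)
  case (Suc k)
  have "foldl dstep (Dg (cls j)) (replicate (Suc k) dd) = foldl dstep (Dg (cls (Suc j))) (replicate k dd)"
    by (simp add: cls_Suc_cls)
  also have "\<dots> = Dg (cls (Suc j + k))" by (rule Suc.IH)
  finally show ?case by simp
qed simp

lemma run_nu: "foldl dstep (Rt c (cls j)) (replicate k nu) = Rt c (cls (j + k))"
proof (induction k arbitrary: j)
  case (Suc k)
  have "foldl dstep (Rt c (cls j)) (replicate (Suc k) nu) = foldl dstep (Rt c (cls (Suc j))) (replicate k nu)"
    by (simp add: cls_Suc_cls)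
  also have "\<dots> = Rt c (cls (Suc j + k))" by (rule Suc.IH)
  finally show ?case by simp
qed simp

lemma run_sn: "foldl dstep (Lt c (cls j)) (replicate k sn) = Lt c (cls (j + k))"
proof (induction k arbitrary: j)
  case (Suc k)
  have "foldl dstep (Lt c (cls j)) (replicate (Suc k) sn) = foldl dstep (Lt c (cls (Suc j))) (replicate k sn)"
    by (simp add: cls_Suc_cls)
  also have "\<dots> = Lt c (cls (Suc j + k))" by (rule Suc.IH)
  finally show ?case by simp
qed simp

lemma run_dd0: "foldl dstep (Dg 0) (replicate k dd) = Dg (cls k)"
  using run_dd[of 0 k] by (simp add: cls_0)

lemma FS_simps: "Dg c \<in> FS \<longleftrightarrow> E c c" "Rt c d \<in> FS \<longleftrightarrow> E c (c + d)"
  "Lt c d \<in> FS \<longleftrightarrow> E (c + d) c" "Dead \<notin> FS"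
  by (auto simp: FS_def)

lemma accept_Wd: "foldl dstep (Dg 0) (Wd m n) \<in> FS \<longleftrightarrow> E m n"
proof -
  consider "m = n" | "m < n" | "n < m" by linarith
  then show ?thesis
  proof cases
    case 1
    then have "foldl dstep (Dg 0) (Wd m n) = Dg (cls m)" by (simp add: Wd_form run_dd0)
    moreover have "E m m = E (cls m) (cls m)" using E_norm[of m 0] by (simp add: cls_0)
    ultimately show ?thesis using 1 by (simp add: FS_simps)
  next
    case 2
    then obtain k where "n = Suc (m + k)" using less_imp_Suc_add by blast
    then have k: "n = m + Suc k" by simp
    have "foldl dstep (Dg 0) (Wd m n) = foldl dstep (Rt (cls m) (cls 1)) (replicate k nu)"
      using k by (simp add: Wd_form run_dd0)
    also have "\<dots> = Rt (cls m) (cls (Suc k))" using run_nu[of "cls m" 1 k] by simp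
    finally have "foldl dstep (Dg 0) (Wd m n) = Rt (cls m) (cls (Suc k))" .
    moreover have "E m (m + Suc k) = E (cls m) (cls m + cls (Suc k))" using E_norm[of m "Suc k"] by simp
    ultimately show ?thesis using k by (simp add: FS_simps)
  next
    case 3
    then obtain k where "m = Suc (n + k)" using less_imp_Suc_add by blast
    then have k: "m = n + Suc k" by simp
    have "foldl dstep (Dg 0) (Wd m n) = foldl dstep (Lt (cls n) (cls 1)) (replicate k sn)"
      using k by (simp add: Wd_form run_dd0)
    also have "\<dots> = Lt (cls n) (cls (Suc k))" using run_sn[of "cls n" 1 k] by simp
    finally have "foldl dstep (Dg 0) (Wd m n) = Lt (cls n) (cls (Suc k))" .
    moreover have "E (n + Suc k) n = E (cls n + cls (Suc k)) (cls n)" using E_norm[of n "Suc k"] by simp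
    ultimately show ?thesis using k by (simp add: FS_simps)
  qed
qed

lemma run_char:
  "(foldl dstep (Dg 0) w = Dg c \<longrightarrow> (\<exists>m. w = replicate m dd \<and> c = cls m)) \<and>
   (foldl dstep (Dg 0) w = Rt c d \<longrightarrow> (\<exists>m k. w = replicate m dd @ replicate (Suc k) nu \<and> c = cls m \<and> d = cls (Suc k))) \<and>
   (foldl dstep (Dg 0) w = Lt c d \<longrightarrow> (\<exists>m k. w = replicate m dd @ replicate (Suc k) sn \<and> c = cls m \<and> d = cls (Suc k)))"
proof (induction w arbitrary: c d rule: rev_induct)
  case Nil then show ?case by (auto simp: cls_0)
next
  case (snoc l w)
  show ?case
  proof (cases "foldl dstep (Dg 0) w")
    case (Dg c0)
    then obtain m where m: "w = replicate m dd" "c0 = cls m" using snoc.IH by blast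
    consider "l = dd" | "l = nu" | "l = sn" | "l \<noteq> dd \<and> l \<noteq> nu \<and> l \<noteq> sn" by blast
    then show ?thesis
    proof cases
      case 1
      have st: "foldl dstep (Dg 0) (w @ [l]) = Dg (cls (Suc m))" using Dg m 1 by (simp add: cls_Suc_cls)
      have r: "w @ [l] = replicate (Suc m) dd" using m 1 by (simp add: replicate_append_same)
      show ?thesis
      proof (intro conjI impI)
        assume "foldl dstep (Dg 0) (w @ [l]) = Dg c"
        then have "c = cls (Suc m)" using st by simp
        then show "\<exists>m. w @ [l] = replicate m dd \<and> c = cls m" using r by blast
      qed (use st in simp_all)
    next
      case 2
      have st: "foldl dstep (Dg 0) (w @ [l]) = Rt (cls m) (cls (Suc 0))" using Dg m 2 by simp
      have r: "w @ [l] = replicate m dd @ replicate (Suc 0) nu" using m 2 by simp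
      show ?thesis
      proof (intro conjI impI)
        assume "foldl dstep (Dg 0) (w @ [l]) = Rt c d"
        then have "c = cls m" "d = cls (Suc 0)" using st by simp_all
        then show "\<exists>m k. w @ [l] = replicate m dd @ replicate (Suc k) nu \<and> c = cls m \<and> d = cls (Suc k)"
          using r by blast
      qed (use st in simp_all)
    next
      case 3
      have st: "foldl dstep (Dg 0) (w @ [l]) = Lt (cls m) (cls (Suc 0))" using Dg m 3 by simp
      have r: "w @ [l] = replicate m dd @ replicate (Suc 0) sn" using m 3 by simp
      show ?thesis
      proof (intro conjI impI)
        assume "foldl dstep (Dg 0) (w @ [l]) = Lt c d"
        then have "c = cls m" "d = cls (Suc 0)" using st by simp_all
        then show "\<exists>m k. w @ [l] = replicate m dd @ replicate (Suc k) sn \<and> c = cls m \<and> d = cls (Suc k)"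
          using r by blast
      qed (use st in simp_all)
    next
      case 4
      have st: "foldl dstep (Dg 0) (w @ [l]) = Dead" using Dg 4 by auto
      then show ?thesis by simp
    qed
  next
    case (Rt c0 d0)
    then obtain m k where m: "w = replicate m dd @ replicate (Suc k) nu" "c0 = cls m" "d0 = cls (Suc k)"
      using snoc.IH by blast
    show ?thesis
    proof (cases "l = nu")
      case True
      have st: "foldl dstep (Dg 0) (w @ [l]) = Rt (cls m) (cls (Suc (Suc k)))"
        using Rt m True by (simp add: cls_Suc_cls del: replicate_Suc)
      have r: "w @ [l] = replicate m dd @ replicate (Suc (Suc k)) nu"
        using m True by (simp add: replicate_append_same)
      show ?thesis
      proof (intro conjI impI)
        assume "foldl dstep (Dg 0) (w @ [l]) = Rt c d"
        then have "c = cls m" "d = cls (Suc (Suc k))" using st by simp_all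
        then show "\<exists>m k. w @ [l] = replicate m dd @ replicate (Suc k) nu \<and> c = cls m \<and> d = cls (Suc k)"
          using r by blast
      qed (use st in simp_all)
    next
      case False
      then have "foldl dstep (Dg 0) (w @ [l]) = Dead" using Rt by simp
      then show ?thesis by simp
    qed
  next
    case (Lt c0 d0)
    then obtain m k where m: "w = replicate m dd @ replicate (Suc k) sn" "c0 = cls m" "d0 = cls (Suc k)"
      using snoc.IH by blast
    show ?thesis
    proof (cases "l = sn")
      case True
      have st: "foldl dstep (Dg 0) (w @ [l]) = Lt (cls m) (cls (Suc (Suc k)))"
        using Lt m True by (simp add: cls_Suc_cls del: replicate_Suc)
      have r: "w @ [l] = replicate m dd @ replicate (Suc (Suc k)) sn"
        using m True by (simp add: replicate_append_same)
      show ?thesis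
      proof (intro conjI impI)
        assume "foldl dstep (Dg 0) (w @ [l]) = Lt c d"
        then have "c = cls m" "d = cls (Suc (Suc k))" using st by simp_all
        then show "\<exists>m k. w @ [l] = replicate m dd @ replicate (Suc k) sn \<and> c = cls m \<and> d = cls (Suc k)"
          using r by blast
      qed (use st in simp_all)
    next
      case False
      then have "foldl dstep (Dg 0) (w @ [l]) = Dead" using Lt by simp
      then show ?thesis by simp
    qed
  next
    case Dead
    then show ?thesis by simp
  qed
qed

lemma lang: "{Wd m n | m n. E m n} = {w \<in> lists (conv_alphabet {()} 2). foldl dstep (Dg 0) w \<in> FS}"
proof (intro set_eqI iffI)
  fix w assume "w \<in> {Wd m n | m n. E m n}"
  then obtain m n where "w = Wd m n" "E m n" by blast
  then show "w \<in> {w \<in> lists (conv_alphabet {()} 2). foldl dstep (Dg 0) w \<in> FS}"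
    using Wd_lists accept_Wd by auto
next
  fix w assume w: "w \<in> {w \<in> lists (conv_alphabet {()} 2). foldl dstep (Dg 0) w \<in> FS}"
  then have acc: "foldl dstep (Dg 0) w \<in> FS" by simp
  have "\<exists>m n. w = Wd m n"
  proof (cases "foldl dstep (Dg 0) w")
    case (Dg c)
    then obtain m where "w = replicate m dd" using run_char by blast
    then have "w = Wd m m" by (simp add: Wd_form)
    then show ?thesis by blast
  next
    case (Rt c d)
    then obtain m k where "w = replicate m dd @ replicate (Suc k) nu" using run_char by blast
    then have "w = Wd m (m + Suc k)" by (simp add: Wd_form del: replicate_Suc)
    then show ?thesis by blast
  next
    case (Lt c d)
    then obtain m k where "w = replicate m dd @ replicate (Suc k) sn" using run_char by blast
    then have "w = Wd (m + Suc k) m" by (simp add: Wd_form del: replicate_Suc)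
    then show ?thesis by blast
  next
    case Dead then show ?thesis using acc by (simp add: FS_simps)
  qed
  then obtain m n where "w = Wd m n" by blast
  then show "w \<in> {Wd m n | m n. E m n}" using acc accept_Wd by blast
qed

lemma QS_finite: "finite QS"
proof (rule finite_subset)
  define B where "B = {0..<N+p}"
  show "QS \<subseteq> Dg ` B \<union> (\<lambda>(c,d). Rt c d) ` (B \<times> B) \<union> (\<lambda>(c,d). Lt c d) ` (B \<times> B) \<union> {Dead}"
  proof
    fix s assume s: "s \<in> QS"
    show "s \<in> Dg ` B \<union> (\<lambda>(c,d). Rt c d) ` (B \<times> B) \<union> (\<lambda>(c,d). Lt c d) ` (B \<times> B) \<union> {Dead}"
    proof (cases s)
      case (Dg c) then show ?thesis using s by (auto simp: QS_def B_def)
    next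
      case (Rt c d)
      then have "s = (\<lambda>(c,d). Rt c d) (c, d)" "(c, d) \<in> B \<times> B" using s by (auto simp: QS_def B_def)
      then show ?thesis by blast
    next
      case (Lt c d)
      then have "s = (\<lambda>(c,d). Lt c d) (c, d)" "(c, d) \<in> B \<times> B" using s by (auto simp: QS_def B_def)
      then show ?thesis by blast
    qed simp
  qed
  show "finite (Dg ` B \<union> (\<lambda>(c,d). Rt c d) ` (B \<times> B) \<union> (\<lambda>(c,d). Lt c d) ` (B \<times> B) \<union> {Dead})"
    by (simp add: B_def)
qed

lemma QS_closed: "\<forall>q\<in>QS. \<forall>x\<in>conv_alphabet {()} 2. dstep q x \<in> QS"
proof (intro ballI)
  fix q x assume "q \<in> QS"
  then show "dstep q x \<in> QS" using cls_lt by (cases q) (auto simp: QS_def)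
qed

lemma per_reg: "regular_lang (conv_alphabet {()} 2) {Wd m n | m n. E m n}"
proof (rule reg_from_dfa[OF conv_alph_finite _ QS_finite _ QS_closed lang])
  show "{Wd m n | m n. E m n} \<subseteq> lists (conv_alphabet {()} 2)" using Wd_lists by blast
  show "Dg 0 \<in> QS" using p_pos unfolding QS_def by simp
qed

end

lemma rtc_transfer:
  assumes inj: "inj (psi :: nat \<Rightarrow> 's)"
  shows "(\<lambda>a b. a \<in> range psi \<and> b \<in> range psi \<and> R a b)\<^sup>*\<^sup>* (psi m) (psi n) \<longleftrightarrow>
         (\<lambda>i j. R (psi i) (psi j))\<^sup>*\<^sup>* m n"
proof
  assume "(\<lambda>i j. R (psi i) (psi j))\<^sup>*\<^sup>* m n"
  then show "(\<lambda>a b. a \<in> range psi \<and> b \<in> range psi \<and> R a b)\<^sup>*\<^sup>* (psi m) (psi n)"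
    by (induction rule: rtranclp_induct) (auto intro: rtranclp.rtrancl_into_rtrancl)
next
  assume A: "(\<lambda>a b. a \<in> range psi \<and> b \<in> range psi \<and> R a b)\<^sup>*\<^sup>* (psi m) (psi n)"
  have "\<exists>k. b = psi k \<and> (\<lambda>i j. R (psi i) (psi j))\<^sup>*\<^sup>* m k"
    if "(\<lambda>a b. a \<in> range psi \<and> b \<in> range psi \<and> R a b)\<^sup>*\<^sup>* (psi m) b" for b
    using that
  proof (induction rule: rtranclp_induct)
    case base then show ?case by blast
  next
    case (step b c)
    then obtain k where k: "b = psi k" "(\<lambda>i j. R (psi i) (psi j))\<^sup>*\<^sup>* m k" by blast
    obtain k' where k': "c = psi k'" using step(2) by blast
    have "R (psi k) (psi k')" using step(2) k k' by simp
    then have "(\<lambda>i j. R (psi i) (psi j))\<^sup>*\<^sup>* m k'" using k(2)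
      by (meson rtranclp.rtrancl_into_rtrancl)
    then show ?case using k' by blast
  qed
  then obtain k where "psi n = psi k" "(\<lambda>i j. R (psi i) (psi j))\<^sup>*\<^sup>* m k" using A by blast
  then show "(\<lambda>i j. R (psi i) (psi j))\<^sup>*\<^sup>* m n" using inj by (metis injD)
qed

theorem theorem4p1:
  fixes S :: "'s set" and rels :: "(nat \<times> ('s list \<Rightarrow> bool)) list"
    and phi :: "unit list \<Rightarrow> 's" and P :: "'s list \<Rightarrow> bool"
  assumes "injective_unary_FA_presentation S rels phi"
    and "(2, P) \<in> set rels"
  shows "regular_rel {()} 2 (Lambda (lists {()}) phi 2 (\<lambda>xs. rtc_on S P (xs ! 0) (xs ! 1)))
         \<and> unary_FA_presentable S (rels @ [(2, \<lambda>xs. rtc_on S P (xs ! 0) (xs ! 1))])"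
proof -
  have FA: "FA_presentation {()} (lists {()}) phi S rels" and inj: "inj_on phi (lists {()})"
    using assms(1) by (auto simp: injective_unary_FA_presentation_def)
  have img: "phi ` lists {()} = S" using FA by (simp add: FA_presentation_def)
  have allrels: "\<forall>(r, Q) \<in> set rels. regular_rel {()} r (Lambda (lists {()}) phi r Q)"
    using FA unfolding FA_presentation_def by (elim conjE)
  have regP: "regular_rel {()} 2 (Lambda (lists {()}) phi 2 P)"
    using allrels assms(2) by fastforce
  have lists_UNIV: "lists {()} = (UNIV :: unit list set)" by auto
  define psi where "psi m = phi (replicate m ())" for m
  define E where "E m n = P [psi m, psi n]" for m n
  have inj_psi: "inj psi"
  proof (rule injI)
    fix a b assume "psi a = psi b"
    then have "phi (replicate a ()) = phi (replicate b ())" unfolding psi_def .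
    then have "replicate a () = replicate b ()" by (rule inj_onD[OF inj]) auto
    then show "a = b" by (metis length_replicate)
  qed
  have range_psi: "range psi = S"
  proof -
    have "range psi = phi ` UNIV"
    proof (intro set_eqI iffI)
      fix x assume "x \<in> range psi" then show "x \<in> phi ` UNIV" unfolding psi_def by blast
    next
      fix x assume "x \<in> phi ` UNIV"
      then obtain u where "x = phi u" by blast
      then have "x = psi (length u)" unfolding psi_def using unit_list_rep[of u] by simp
      then show "x \<in> range psi" by blast
    qed
    then show ?thesis using img lists_UNIV by simp
  qed
  have convP: "conv ` Lambda (lists {()}) phi 2 P = {Wd m n | m n. E m n}"
    unfolding Lambda_conv E_def psi_def by simp
  have "regular_lang (conv_alphabet {()} 2) {Wd m n | m n. E m n}"
    using regP convP unfolding regular_rel_def by simp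
  then obtain N p where "per E N p" using reg_per by blast
  then interpret per E N p .
  have perQ: "per (E\<^sup>*\<^sup>*) (N + CC + 1) PP" by (rule rtc_per)
  have Qeq: "rtc_on S P (psi m) (psi n) = E\<^sup>*\<^sup>* m n" for m n
    unfolding rtc_on_def E_def range_psi[symmetric] by (rule rtc_transfer[OF inj_psi])
  have convQ: "conv ` Lambda (lists {()}) phi 2 (\<lambda>xs. rtc_on S P (xs ! 0) (xs ! 1)) = {Wd m n | m n. E\<^sup>*\<^sup>* m n}"
    unfolding Lambda_conv using Qeq by (simp add: psi_def)
  have regQ: "regular_rel {()} 2 (Lambda (lists {()}) phi 2 (\<lambda>xs. rtc_on S P (xs ! 0) (xs ! 1)))"
    unfolding regular_rel_def
  proof
    show "Lambda (lists {()}) phi 2 (\<lambda>xs. rtc_on S P (xs ! 0) (xs ! 1)) \<subseteq> {ws. length ws = 2 \<and> set ws \<subseteq> lists {()}}"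
      by (auto simp: Lambda_def)
    show "regular_lang (conv_alphabet {()} 2) (conv ` Lambda (lists {()}) phi 2 (\<lambda>xs. rtc_on S P (xs ! 0) (xs ! 1)))"
      unfolding convQ by (rule per.per_reg[OF perQ])
  qed
  have "FA_presentation {()} (lists {()}) phi S (rels @ [(2, \<lambda>xs. rtc_on S P (xs ! 0) (xs ! 1))])"
  proof -
    have "finite {()} \<and> regular_lang {()} (lists {()}) \<and> phi ` lists {()} = S \<and>
      regular_rel {()} 2 (Lambda (lists {()}) phi 2 (\<lambda>xs. xs ! 0 = xs ! 1))"
      using FA unfolding FA_presentation_def by (elim conjE) simp
    moreover have "\<forall>(r, Q) \<in> set (rels @ [(2, \<lambda>xs. rtc_on S P (xs ! 0) (xs ! 1))]).
        regular_rel {()} r (Lambda (lists {()}) phi r Q)"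
      using allrels regQ by simp
    ultimately show ?thesis unfolding FA_presentation_def by simp
  qed
  then have "unary_FA_presentable S (rels @ [(2, \<lambda>xs. rtc_on S P (xs ! 0) (xs ! 1))])"
    unfolding unary_FA_presentable_def by blast
  then show ?thesis using regQ by simp
qed

end
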